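(* Let $P:\mathcal C^{op}\to\mathbf{Pos}$ be a doctrine and $\mathsf K=(K,\kappa,\mu,\nu)$ a comonad on $P$ in $\mathbf{IdxPos}$ (so $(K,\mu,\nu)$ is a comonad on $\mathcal C$, $\kappa:P\Rightarrow PK^{op}$ is natural, and $\kappa_X\le P(\mu_X)\circ\kappa_{KX}\circ\kappa_X$, $\kappa_X\le P(\nu_X)$). Let $\mathcal C_K$ be the category of $K$-coalgebras $(C,c)$, $c:C\to KC$, with coalgebra morphisms, and let $P^{\mathsf K}:\mathcal C_K^{op}\to\mathbf{Pos}$ be the doctrine with $P^{\mathsf K}(C,c)=\{\alpha\in PC\mid\alpha\le P(c)(\kappa_C(\alpha))\}$ (suborder of $PC$) and reindexing along a coalgebra morphism $t$ given by the restriction of $P(t)$. Let $(U,u):P^{\mathsf K}\to P$ be the 1-arrow with $U:\mathcal C_K\to\mathcal C$ the forgetful functor and $u_{(C,c)}:P^{\mathsf K}(C,c)\hookrightarrow PC$ the inclusion, and let $\omega:(U,u)\Rightarrow(K,\kappa)\circ(U,u)$ be the 2-arrow with $\omega_{(C,c)}=c$. Then $(P^{\mathsf K},(U,u),\omega)$ is the Eilenberg-Moore construction for $\mathsf K$ in $\mathbf{IdxPos}$, namely: (a) for every doctrine $Q:\mathcal D^{op}\to\mathbf{Pos}$, every 1-arrow $(X,x):Q\to P$ and every 2-arrow $\xi:(X,x)\Rightarrow(K,\kappa)\circ(X,x)$ in $\mathbf{IdxPos}$ satisfying $(\mu X)\cdot\xi=(K\xi)\cdot\xi$ and $(\nu X)\cdot\xi=\mathrm{id}_X$,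 there is a unique 1-arrow $(X',x'):Q\to P^{\mathsf K}$ with $(U,u)\circ(X',x')=(X,x)$ and $\omega(X',x')=\xi$ (i.e. $\omega_{X'D}=\xi_D$ for all $D$); (b) for two such pairs $((X,x),\xi)$, $((Y,y),\zeta)$ with induced $(X',x'),(Y',y')$, and every 2-arrow $\gamma:(X,x)\Rightarrow(Y,y)$ with $\zeta\cdot\gamma=(K\gamma)\cdot\xi$, there is a unique 2-arrow $\gamma':(X',x')\Rightarrow(Y',y')$ in $\mathbf{IdxPos}$ with $U\gamma'=\gamma$.
   Context: A doctrine is a functor $P:\mathcal C^{op}\to\mathbf{Pos}$; for $t:X\to Y$, $P(t):PY\to PX$ is reindexing. In the 2-category $\mathbf{IdxPos}$, a 1-arrow $(F,f):P\to Q$ (with $P:\mathcal C^{op}\to\mathbf{Pos}$, $Q:\mathcal D^{op}\to\mathbf{Pos}$) is a functor $F:\mathcal C\to\mathcal D$ with a natural transformation $f:P\Rightarrow Q\circ F^{op}$; a 2-arrow $\theta:(F,f)\Rightarrow(F',f')$ is a natural transformation $\theta:F\Rightarrow F'$ with $f_X(\alpha)\le Q(\theta_X)(f'_X(\alpha))$ for all $X,\alpha$; composition of $(G,g)$ then $(F,f)$ is $(FG,(fG^{op})\cdot g)$ (components $f_{GX}\circ g_X$), and vertical/horizontal composition of 2-arrows is that of natural transformations. A $K$-coalgebra for a comonad $(K,\mu,\nu)$ on $\mathcal C$ is $(C,c)$ with $c:C\to KC$, $\nu_C\circ c=\mathrm{id}_C$, $\mu_C\circ c=Kc\circ c$; a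 morphism $t:(C,c)\to(C',c')$ is $t:C\to C'$ with $c'\circ t=Kt\circ c$. *)

theory Defs
  imports Main
begin

text \<open>Small categories in hom-set style: a set of objects, hom-sets, composition
  (cmp g f = g after f) and identities.  Functors are given by an object map and an
  arrow map.\<close>

record ('o, 'a) cat =
  Obj :: "'o set"
  Hom :: "'o \<Rightarrow> 'o \<Rightarrow> 'a set"
  cmp :: "'a \<Rightarrow> 'a \<Rightarrow> 'a"
  idt :: "'o \<Rightarrow> 'a"

definition category :: "('o, 'a) cat \<Rightarrow> bool" where
  "category C \<longleftrightarrow>
     (\<forall>X Y. Hom C X Y \<noteq> {} \<longrightarrow> X \<in> Obj C \<and> Y \<in> Obj C) \<and>
     (\<forall>X\<in>Obj C. idt C X \<in> Hom C X X) \<and>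
     (\<forall>X Y Z f g. f \<in> Hom C X Y \<longrightarrow> g \<in> Hom C Y Z \<longrightarrow> cmp C g f \<in> Hom C X Z) \<and>
     (\<forall>X Y f. f \<in> Hom C X Y \<longrightarrow> cmp C f (idt C X) = f \<and> cmp C (idt C Y) f = f) \<and>
     (\<forall>W X Y Z f g h. f \<in> Hom C W X \<longrightarrow> g \<in> Hom C X Y \<longrightarrow> h \<in> Hom C Y Z \<longrightarrow>
        cmp C h (cmp C g f) = cmp C (cmp C h g) f)"

definition is_functor ::
  "('o, 'a) cat \<Rightarrow> ('o2, 'a2) cat \<Rightarrow> ('o \<Rightarrow> 'o2) \<Rightarrow> ('a \<Rightarrow> 'a2) \<Rightarrow> bool" where
  "is_functor C D Fo Fa \<longleftrightarrow> category C \<and> category D \<and>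
     (\<forall>X\<in>Obj C. Fo X \<in> Obj D) \<and>
     (\<forall>X Y f. f \<in> Hom C X Y \<longrightarrow> Fa f \<in> Hom D (Fo X) (Fo Y)) \<and>
     (\<forall>X\<in>Obj C. Fa (idt C X) = idt D (Fo X)) \<and>
     (\<forall>X Y Z f g. f \<in> Hom C X Y \<longrightarrow> g \<in> Hom C Y Z \<longrightarrow>
        Fa (cmp C g f) = cmp D (Fa g) (Fa f))"

definition nat_trans ::
  "('o, 'a) cat \<Rightarrow> ('o2, 'a2) cat \<Rightarrow> ('o \<Rightarrow> 'o2) \<Rightarrow> ('a \<Rightarrow> 'a2) \<Rightarrow>
   ('o \<Rightarrow> 'o2) \<Rightarrow> ('a \<Rightarrow> 'a2) \<Rightarrow> ('o \<Rightarrow> 'a2) \<Rightarrow> bool" where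
  "nat_trans C D Fo Fa Go Ga \<theta> \<longleftrightarrow> is_functor C D Fo Fa \<and> is_functor C D Go Ga \<and>
     (\<forall>X\<in>Obj C. \<theta> X \<in> Hom D (Fo X) (Go X)) \<and>
     (\<forall>X Y f. f \<in> Hom C X Y \<longrightarrow> cmp D (\<theta> Y) (Fa f) = cmp D (Ga f) (\<theta> X))"

definition poset_on :: "'p set \<Rightarrow> ('p \<Rightarrow> 'p \<Rightarrow> bool) \<Rightarrow> bool" where
  "poset_on A le \<longleftrightarrow> (\<forall>a\<in>A. le a a) \<and>
     (\<forall>a\<in>A. \<forall>b\<in>A. le a b \<and> le b a \<longrightarrow> a = b) \<and>
     (\<forall>a\<in>A. \<forall>b\<in>A. \<forall>c\<in>A. le a b \<and> le b c \<longrightarrow> le a c)"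

text \<open>A doctrine P : C^op \<rightarrow> Pos: for each object a poset (car, leq),
  and reindexing rdx t : P Y \<rightarrow> P X along t : X \<rightarrow> Y.\<close>

record ('o, 'a, 'p) doct =
  car :: "'o \<Rightarrow> 'p set"
  leq :: "'o \<Rightarrow> 'p \<Rightarrow> 'p \<Rightarrow> bool"
  rdx :: "'a \<Rightarrow> 'p \<Rightarrow> 'p"

definition doctrine :: "('o, 'a) cat \<Rightarrow> ('o, 'a, 'p) doct \<Rightarrow> bool" where
  "doctrine C P \<longleftrightarrow> category C \<and>
     (\<forall>X\<in>Obj C. poset_on (car P X) (leq P X)) \<and>
     (\<forall>X Y t. t \<in> Hom C X Y \<longrightarrow>
        (\<forall>\<alpha>\<in>car P Y. rdx P t \<alpha> \<in> car P X) \<and>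
        (\<forall>\<alpha>\<in>car P Y. \<forall>\<beta>\<in>car P Y. leq P Y \<alpha> \<beta> \<longrightarrow> leq P X (rdx P t \<alpha>) (rdx P t \<beta>))) \<and>
     (\<forall>X\<in>Obj C. \<forall>\<alpha>\<in>car P X. rdx P (idt C X) \<alpha> = \<alpha>) \<and>
     (\<forall>X Y Z f g. f \<in> Hom C X Y \<longrightarrow> g \<in> Hom C Y Z \<longrightarrow>
        (\<forall>\<alpha>\<in>car P Z. rdx P (cmp C g f) \<alpha> = rdx P f (rdx P g \<alpha>)))"

definition one_arrow ::
  "('o, 'a) cat \<Rightarrow> ('o, 'a, 'p) doct \<Rightarrow> ('o2, 'a2) cat \<Rightarrow> ('o2, 'a2, 'q) doct \<Rightarrow>
   ('o \<Rightarrow> 'o2) \<Rightarrow> ('a \<Rightarrow> 'a2) \<Rightarrow> ('o \<Rightarrow> 'p \<Rightarrow> 'q) \<Rightarrow> bool" where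
  "one_arrow C P D Q Fo Fa f \<longleftrightarrow> doctrine C P \<and> doctrine D Q \<and> is_functor C D Fo Fa \<and>
     (\<forall>X\<in>Obj C. (\<forall>\<alpha>\<in>car P X. f X \<alpha> \<in> car Q (Fo X)) \<and>
        (\<forall>\<alpha>\<in>car P X. \<forall>\<beta>\<in>car P X. leq P X \<alpha> \<beta> \<longrightarrow> leq Q (Fo X) (f X \<alpha>) (f X \<beta>))) \<and>
     (\<forall>X Y t. t \<in> Hom C X Y \<longrightarrow> (\<forall>\<alpha>\<in>car P Y. f X (rdx P t \<alpha>) = rdx Q (Fa t) (f Y \<alpha>)))"

definition two_arrow ::
  "('o, 'a) cat \<Rightarrow> ('o, 'a, 'p) doct \<Rightarrow> ('o2, 'a2) cat \<Rightarrow> ('o2, 'a2, 'q) doct \<Rightarrow>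
   ('o \<Rightarrow> 'o2) \<Rightarrow> ('a \<Rightarrow> 'a2) \<Rightarrow> ('o \<Rightarrow> 'p \<Rightarrow> 'q) \<Rightarrow>
   ('o \<Rightarrow> 'o2) \<Rightarrow> ('a \<Rightarrow> 'a2) \<Rightarrow> ('o \<Rightarrow> 'p \<Rightarrow> 'q) \<Rightarrow> ('o \<Rightarrow> 'a2) \<Rightarrow> bool" where
  "two_arrow C P D Q Fo Fa f Go Ga g \<theta> \<longleftrightarrow>
     one_arrow C P D Q Fo Fa f \<and> one_arrow C P D Q Go Ga g \<and> nat_trans C D Fo Fa Go Ga \<theta> \<and>
     (\<forall>X\<in>Obj C. \<forall>\<alpha>\<in>car P X. leq Q (Fo X) (f X \<alpha>) (rdx Q (\<theta> X) (g X \<alpha>)))"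

definition comonad_on ::
  "('o, 'a) cat \<Rightarrow> ('o, 'a, 'p) doct \<Rightarrow> ('o \<Rightarrow> 'o) \<Rightarrow> ('a \<Rightarrow> 'a) \<Rightarrow>
   ('o \<Rightarrow> 'p \<Rightarrow> 'p) \<Rightarrow> ('o \<Rightarrow> 'a) \<Rightarrow> ('o \<Rightarrow> 'a) \<Rightarrow> bool" where
  "comonad_on C P Ko Ka \<kappa> \<mu> \<nu> \<longleftrightarrow>
     one_arrow C P C P Ko Ka \<kappa> \<and>
     two_arrow C P C P Ko Ka \<kappa> (Ko \<circ> Ko) (Ka \<circ> Ka) (\<lambda>X \<alpha>. \<kappa> (Ko X) (\<kappa> X \<alpha>)) \<mu> \<and>
     two_arrow C P C P Ko Ka \<kappa> id id (\<lambda>X \<alpha>. \<alpha>) \<nu> \<and>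
     (\<forall>X\<in>Obj C. cmp C (Ka (\<mu> X)) (\<mu> X) = cmp C (\<mu> (Ko X)) (\<mu> X) \<and>
        cmp C (\<nu> (Ko X)) (\<mu> X) = idt C (Ko X) \<and>
        cmp C (Ka (\<nu> X)) (\<mu> X) = idt C (Ko X))"

definition coalgebra ::
  "('o, 'a) cat \<Rightarrow> ('o \<Rightarrow> 'o) \<Rightarrow> ('a \<Rightarrow> 'a) \<Rightarrow> ('o \<Rightarrow> 'a) \<Rightarrow> ('o \<Rightarrow> 'a) \<Rightarrow> 'o \<times> 'a \<Rightarrow> bool" where
  "coalgebra C Ko Ka \<mu> \<nu> A \<longleftrightarrow> fst A \<in> Obj C \<and> snd A \<in> Hom C (fst A) (Ko (fst A)) \<and>
     cmp C (\<nu> (fst A)) (snd A) = idt C (fst A) \<and>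
     cmp C (\<mu> (fst A)) (snd A) = cmp C (Ka (snd A)) (snd A)"

definition coalg_cat ::
  "('o, 'a) cat \<Rightarrow> ('o \<Rightarrow> 'o) \<Rightarrow> ('a \<Rightarrow> 'a) \<Rightarrow> ('o \<Rightarrow> 'a) \<Rightarrow> ('o \<Rightarrow> 'a) \<Rightarrow> ('o \<times> 'a, 'a) cat" where
  "coalg_cat C Ko Ka \<mu> \<nu> =
     \<lparr> Obj = {A. coalgebra C Ko Ka \<mu> \<nu> A},
       Hom = (\<lambda>A B. if coalgebra C Ko Ka \<mu> \<nu> A \<and> coalgebra C Ko Ka \<mu> \<nu> B
                     then {t \<in> Hom C (fst A) (fst B). cmp C (snd B) t = cmp C (Ka t) (snd A)}
                     else {}),
       cmp = cmp C,
       idt = (\<lambda>A. idt C (fst A)) \<rparr>"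

definition coalg_doct ::
  "('o, 'a, 'p) doct \<Rightarrow> ('o \<Rightarrow> 'p \<Rightarrow> 'p) \<Rightarrow> ('o \<times> 'a, 'a, 'p) doct" where
  "coalg_doct P \<kappa> =
     \<lparr> car = (\<lambda>A. {\<alpha> \<in> car P (fst A). leq P (fst A) \<alpha> (rdx P (snd A) (\<kappa> (fst A) \<alpha>))}),
       leq = (\<lambda>A. leq P (fst A)),
       rdx = rdx P \<rparr>"

definition em_cone ::
  "('e, 'd) cat \<Rightarrow> ('e, 'd, 'q) doct \<Rightarrow> ('o, 'a) cat \<Rightarrow> ('o, 'a, 'p) doct \<Rightarrow>
   ('o \<Rightarrow> 'o) \<Rightarrow> ('a \<Rightarrow> 'a) \<Rightarrow> ('o \<Rightarrow> 'p \<Rightarrow> 'p) \<Rightarrow> ('o \<Rightarrow> 'a) \<Rightarrow> ('o \<Rightarrow> 'a) \<Rightarrow>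
   ('e \<Rightarrow> 'o) \<Rightarrow> ('d \<Rightarrow> 'a) \<Rightarrow> ('e \<Rightarrow> 'q \<Rightarrow> 'p) \<Rightarrow> ('e \<Rightarrow> 'a) \<Rightarrow> bool" where
  "em_cone D Q C P Ko Ka \<kappa> \<mu> \<nu> Xo Xa x \<xi> \<longleftrightarrow>
     two_arrow D Q C P Xo Xa x (Ko \<circ> Xo) (Ka \<circ> Xa) (\<lambda>E \<beta>. \<kappa> (Xo E) (x E \<beta>)) \<xi> \<and>
     (\<forall>E\<in>Obj D. cmp C (\<mu> (Xo E)) (\<xi> E) = cmp C (Ka (\<xi> E)) (\<xi> E) \<and>
        cmp C (\<nu> (Xo E)) (\<xi> E) = idt C (Xo E))"

text \<open>(X',x') : Q \<rightarrow> P^K is a 1-arrow with (U,u)\<circ>(X',x') = (X,x) and \<omega>(X',x') = \<xi>.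
  Equality of 1-arrows is equality of the components on their domains.\<close>

definition em_lift ::
  "('e, 'd) cat \<Rightarrow> ('e, 'd, 'q) doct \<Rightarrow> ('o, 'a) cat \<Rightarrow> ('o, 'a, 'p) doct \<Rightarrow>
   ('o \<Rightarrow> 'o) \<Rightarrow> ('a \<Rightarrow> 'a) \<Rightarrow> ('o \<Rightarrow> 'p \<Rightarrow> 'p) \<Rightarrow> ('o \<Rightarrow> 'a) \<Rightarrow> ('o \<Rightarrow> 'a) \<Rightarrow>
   ('e \<Rightarrow> 'o) \<Rightarrow> ('d \<Rightarrow> 'a) \<Rightarrow> ('e \<Rightarrow> 'q \<Rightarrow> 'p) \<Rightarrow> ('e \<Rightarrow> 'a) \<Rightarrow>
   ('e \<Rightarrow> 'o \<times> 'a) \<Rightarrow> ('d \<Rightarrow> 'a) \<Rightarrow> ('e \<Rightarrow> 'q \<Rightarrow> 'p) \<Rightarrow> bool" where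
  "em_lift D Q C P Ko Ka \<kappa> \<mu> \<nu> Xo Xa x \<xi> Xo' Xa' x' \<longleftrightarrow>
     one_arrow D Q (coalg_cat C Ko Ka \<mu> \<nu>) (coalg_doct P \<kappa>) Xo' Xa' x' \<and>
     (\<forall>E\<in>Obj D. fst (Xo' E) = Xo E \<and> snd (Xo' E) = \<xi> E) \<and>
     (\<forall>E1 E2 h. h \<in> Hom D E1 E2 \<longrightarrow> Xa' h = Xa h) \<and>
     (\<forall>E\<in>Obj D. \<forall>\<beta>\<in>car Q E. x' E \<beta> = x E \<beta>)"

definition same_one_arrow ::
  "('e, 'd) cat \<Rightarrow> ('e, 'd, 'q) doct \<Rightarrow>
   ('e \<Rightarrow> 'o) \<Rightarrow> ('d \<Rightarrow> 'a) \<Rightarrow> ('e \<Rightarrow> 'q \<Rightarrow> 'p) \<Rightarrow>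
   ('e \<Rightarrow> 'o) \<Rightarrow> ('d \<Rightarrow> 'a) \<Rightarrow> ('e \<Rightarrow> 'q \<Rightarrow> 'p) \<Rightarrow> bool" where
  "same_one_arrow D Q Fo Fa f Go Ga g \<longleftrightarrow>
     (\<forall>E\<in>Obj D. Fo E = Go E) \<and>
     (\<forall>E1 E2 h. h \<in> Hom D E1 E2 \<longrightarrow> Fa h = Ga h) \<and>
     (\<forall>E\<in>Obj D. \<forall>\<beta>\<in>car Q E. f E \<beta> = g E \<beta>)"

end

theory Submission
  imports Defs
begin

lemma cat_facts:
  assumes "category C"
  shows cat_hom_obj: "f \<in> Hom C X Y \<Longrightarrow> X \<in> Obj C \<and> Y \<in> Obj C"
    and cat_id: "X \<in> Obj C \<Longrightarrow> idt C X \<in> Hom C X X"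
    and cat_cmp: "f \<in> Hom C X Y \<Longrightarrow> g \<in> Hom C Y Z \<Longrightarrow> cmp C g f \<in> Hom C X Z"
    and cat_idl: "f \<in> Hom C X Y \<Longrightarrow> cmp C (idt C Y) f = f"
    and cat_idr: "f \<in> Hom C X Y \<Longrightarrow> cmp C f (idt C X) = f"
    and cat_assoc: "f \<in> Hom C W X \<Longrightarrow> g \<in> Hom C X Y \<Longrightarrow> h \<in> Hom C Y Z \<Longrightarrow>
        cmp C h (cmp C g f) = cmp C (cmp C h g) f"
  using assms unfolding category_def by (blast+)[6]

lemma fun_facts:
  assumes "is_functor C D Fo Fa"
  shows fun_catC: "category C" and fun_catD: "category D"
    and fun_obj: "X \<in> Obj C \<Longrightarrow> Fo X \<in> Obj D"
    and fun_hom: "f \<in> Hom C X Y \<Longrightarrow> Fa f \<in> Hom D (Fo X) (Fo Y)"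
    and fun_id: "X \<in> Obj C \<Longrightarrow> Fa (idt C X) = idt D (Fo X)"
    and fun_cmp: "f \<in> Hom C X Y \<Longrightarrow> g \<in> Hom C Y Z \<Longrightarrow> Fa (cmp C g f) = cmp D (Fa g) (Fa f)"
  using assms unfolding is_functor_def by (blast+)[6]

lemma coalg_cat_simps:
  "Obj (coalg_cat C Ko Ka \<mu> \<nu>) = {A. coalgebra C Ko Ka \<mu> \<nu> A}"
  "Hom (coalg_cat C Ko Ka \<mu> \<nu>) A B = (if coalgebra C Ko Ka \<mu> \<nu> A \<and> coalgebra C Ko Ka \<mu> \<nu> B
                     then {t \<in> Hom C (fst A) (fst B). cmp C (snd B) t = cmp C (Ka t) (snd A)}
                     else {})"
  "cmp (coalg_cat C Ko Ka \<mu> \<nu>) = cmp C"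
  "idt (coalg_cat C Ko Ka \<mu> \<nu>) A = idt C (fst A)"
  by (simp_all add: coalg_cat_def)

lemma coalg_doct_simps:
  "car (coalg_doct P \<kappa>) A = {\<alpha> \<in> car P (fst A). leq P (fst A) \<alpha> (rdx P (snd A) (\<kappa> (fst A) \<alpha>))}"
  "leq (coalg_doct P \<kappa>) A = leq P (fst A)"
  "rdx (coalg_doct P \<kappa>) = rdx P"
  by (simp_all add: coalg_doct_def)

lemma coalg_cat_category:
  assumes F: "is_functor C C Ko Ka"
  shows "category (coalg_cat C Ko Ka \<mu> \<nu>)"
proof -
  have cat: "category C" using fun_catC[OF F] .
  note cf = cat_facts[OF cat]
  have hom: "t \<in> Hom (coalg_cat C Ko Ka \<mu> \<nu>) A B \<longleftrightarrow> coalgebra C Ko Ka \<mu> \<nu> A \<and> coalgebra C Ko Ka \<mu> \<nu> B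
     \<and> t \<in> Hom C (fst A) (fst B) \<and> cmp C (snd B) t = cmp C (Ka t) (snd A)" for t A B
    by (auto simp add: coalg_cat_simps)
  have co: "coalgebra C Ko Ka \<mu> \<nu> A \<Longrightarrow> fst A \<in> Obj C \<and> snd A \<in> Hom C (fst A) (Ko (fst A))" for A
    unfolding coalgebra_def by blast
  show ?thesis unfolding category_def
  proof (intro conjI allI impI ballI)
    fix X Y assume "Hom (coalg_cat C Ko Ka \<mu> \<nu>) X Y \<noteq> {}"
    then show "X \<in> Obj (coalg_cat C Ko Ka \<mu> \<nu>)" "Y \<in> Obj (coalg_cat C Ko Ka \<mu> \<nu>)"
      by (auto simp: coalg_cat_simps split: if_splits)
  next
    fix X assume X: "X \<in> Obj (coalg_cat C Ko Ka \<mu> \<nu>)"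
    then have c: "coalgebra C Ko Ka \<mu> \<nu> X" by (simp add: coalg_cat_simps)
    from co[OF c] have "cmp C (snd X) (idt C (fst X)) = cmp C (Ka (idt C (fst X))) (snd X)"
      using cf fun_id[OF F] by metis
    then show "idt (coalg_cat C Ko Ka \<mu> \<nu>) X \<in> Hom (coalg_cat C Ko Ka \<mu> \<nu>) X X"
      using c co[OF c] cf by (simp add: hom coalg_cat_simps)
  next
    fix X Y Z f g
    assume f: "f \<in> Hom (coalg_cat C Ko Ka \<mu> \<nu>) X Y" and g: "g \<in> Hom (coalg_cat C Ko Ka \<mu> \<nu>) Y Z"
    from f have f1: "f \<in> Hom C (fst X) (fst Y)" and f2: "cmp C (snd Y) f = cmp C (Ka f) (snd X)"
      and cX: "coalgebra C Ko Ka \<mu> \<nu> X" by (simp_all add: hom)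
    from g have g1: "g \<in> Hom C (fst Y) (fst Z)" and g2: "cmp C (snd Z) g = cmp C (Ka g) (snd Y)"
      and cZ: "coalgebra C Ko Ka \<mu> \<nu> Z" and cY: "coalgebra C Ko Ka \<mu> \<nu> Y" by (simp_all add: hom)
    have sX: "snd X \<in> Hom C (fst X) (Ko (fst X))" using co[OF cX] by blast
    have sY: "snd Y \<in> Hom C (fst Y) (Ko (fst Y))" using co[OF cY] by blast
    have sZ: "snd Z \<in> Hom C (fst Z) (Ko (fst Z))" using co[OF cZ] by blast
    have Kf: "Ka f \<in> Hom C (Ko (fst X)) (Ko (fst Y))" using fun_hom[OF F f1] .
    have Kg: "Ka g \<in> Hom C (Ko (fst Y)) (Ko (fst Z))" using fun_hom[OF F g1] .
    have "cmp C (snd Z) (cmp C g f) = cmp C (cmp C (snd Z) g) f" using cf(6)[OF f1 g1 sZ] .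
    also have "\<dots> = cmp C (cmp C (Ka g) (snd Y)) f" by (simp add: g2)
    also have "\<dots> = cmp C (Ka g) (cmp C (snd Y) f)" using cf(6)[OF f1 sY Kg] by simp
    also have "\<dots> = cmp C (Ka g) (cmp C (Ka f) (snd X))" by (simp add: f2)
    also have "\<dots> = cmp C (cmp C (Ka g) (Ka f)) (snd X)" using cf(6)[OF sX Kf Kg] .
    also have "\<dots> = cmp C (Ka (cmp C g f)) (snd X)" using fun_cmp[OF F f1 g1] by simp
    finally show "cmp (coalg_cat C Ko Ka \<mu> \<nu>) g f \<in> Hom (coalg_cat C Ko Ka \<mu> \<nu>) X Z"
      using cX cZ cf(3)[OF f1 g1] by (simp add: hom coalg_cat_simps)
  next
    fix X Y f assume f: "f \<in> Hom (coalg_cat C Ko Ka \<mu> \<nu>) X Y"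
    then have "f \<in> Hom C (fst X) (fst Y)" by (simp add: hom)
    then show "cmp (coalg_cat C Ko Ka \<mu> \<nu>) f (idt (coalg_cat C Ko Ka \<mu> \<nu>) X) = f"
      "cmp (coalg_cat C Ko Ka \<mu> \<nu>) (idt (coalg_cat C Ko Ka \<mu> \<nu>) Y) f = f"
      using cf by (simp_all add: coalg_cat_simps)
  next
    fix W X Y Z f g h
    assume "f \<in> Hom (coalg_cat C Ko Ka \<mu> \<nu>) W X" "g \<in> Hom (coalg_cat C Ko Ka \<mu> \<nu>) X Y"
      "h \<in> Hom (coalg_cat C Ko Ka \<mu> \<nu>) Y Z"
    then show "cmp (coalg_cat C Ko Ka \<mu> \<nu>) h (cmp (coalg_cat C Ko Ka \<mu> \<nu>) g f) =
       cmp (coalg_cat C Ko Ka \<mu> \<nu>) (cmp (coalg_cat C Ko Ka \<mu> \<nu>) h g) f"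
      using cf(6) unfolding hom coalg_cat_simps(3) by blast
  qed
qed

lemma doct_facts:
  assumes "doctrine C P"
  shows doct_cat: "category C"
    and doct_poset: "X \<in> Obj C \<Longrightarrow> poset_on (car P X) (leq P X)"
    and doct_rdx: "t \<in> Hom C X Y \<Longrightarrow> \<alpha> \<in> car P Y \<Longrightarrow> rdx P t \<alpha> \<in> car P X"
    and doct_mono: "t \<in> Hom C X Y \<Longrightarrow> \<alpha> \<in> car P Y \<Longrightarrow> \<beta> \<in> car P Y \<Longrightarrow> leq P Y \<alpha> \<beta> \<Longrightarrow>
        leq P X (rdx P t \<alpha>) (rdx P t \<beta>)"
    and doct_id: "X \<in> Obj C \<Longrightarrow> \<alpha> \<in> car P X \<Longrightarrow> rdx P (idt C X) \<alpha> = \<alpha>"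
    and doct_cmp: "f \<in> Hom C X Y \<Longrightarrow> g \<in> Hom C Y Z \<Longrightarrow> \<alpha> \<in> car P Z \<Longrightarrow>
        rdx P (cmp C g f) \<alpha> = rdx P f (rdx P g \<alpha>)"
  using assms unfolding doctrine_def by (blast+)[6]

lemma one_facts:
  assumes "one_arrow C P D Q Fo Fa f"
  shows one_doctC: "doctrine C P" and one_doctD: "doctrine D Q"
    and one_fun: "is_functor C D Fo Fa"
    and one_car: "X \<in> Obj C \<Longrightarrow> \<alpha> \<in> car P X \<Longrightarrow> f X \<alpha> \<in> car Q (Fo X)"
    and one_mono: "X \<in> Obj C \<Longrightarrow> \<alpha> \<in> car P X \<Longrightarrow> \<beta> \<in> car P X \<Longrightarrow> leq P X \<alpha> \<beta> \<Longrightarrow>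
       leq Q (Fo X) (f X \<alpha>) (f X \<beta>)"
    and one_nat: "t \<in> Hom C X Y \<Longrightarrow> \<alpha> \<in> car P Y \<Longrightarrow> f X (rdx P t \<alpha>) = rdx Q (Fa t) (f Y \<alpha>)"
  using assms unfolding one_arrow_def by (blast+)[6]

lemma poset_on_subset: "poset_on A le \<Longrightarrow> B \<subseteq> A \<Longrightarrow> poset_on B le"
  unfolding poset_on_def by blast

lemma coalg_hom:
  "t \<in> Hom (coalg_cat C Ko Ka \<mu> \<nu>) A B \<longleftrightarrow> coalgebra C Ko Ka \<mu> \<nu> A \<and> coalgebra C Ko Ka \<mu> \<nu> B
     \<and> t \<in> Hom C (fst A) (fst B) \<and> cmp C (snd B) t = cmp C (Ka t) (snd A)"
  by (auto simp add: coalg_cat_simps)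

lemma coalgebra_D:
  "coalgebra C Ko Ka \<mu> \<nu> A \<Longrightarrow> fst A \<in> Obj C \<and> snd A \<in> Hom C (fst A) (Ko (fst A))"
  unfolding coalgebra_def by blast

lemma coalg_doct_doctrine:
  assumes K: "one_arrow C P C P Ko Ka \<kappa>"
  shows "doctrine (coalg_cat C Ko Ka \<mu> \<nu>) (coalg_doct P \<kappa>)"
proof -
  have F: "is_functor C C Ko Ka" using one_fun[OF K] .
  have DP: "doctrine C P" using one_doctC[OF K] .
  note cf = cat_facts[OF fun_catC[OF F]]
  note df = doct_facts[OF DP]
  show ?thesis unfolding doctrine_def
  proof (intro conjI allI impI ballI)
    show "category (coalg_cat C Ko Ka \<mu> \<nu>)" using coalg_cat_category[OF F] .
  next
    fix X assume "X \<in> Obj (coalg_cat C Ko Ka \<mu> \<nu>)"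
    then have "coalgebra C Ko Ka \<mu> \<nu> X" by (simp add: coalg_cat_simps)
    then have "fst X \<in> Obj C" using coalgebra_D by blast
    then show "poset_on (car (coalg_doct P \<kappa>) X) (leq (coalg_doct P \<kappa>) X)"
      using df(2) poset_on_subset by (fastforce simp: coalg_doct_simps)
  next
    fix X Y t \<alpha>
    assume t: "t \<in> Hom (coalg_cat C Ko Ka \<mu> \<nu>) X Y" and a: "\<alpha> \<in> car (coalg_doct P \<kappa>) Y"
    from t have t1: "t \<in> Hom C (fst X) (fst Y)" and t2: "cmp C (snd Y) t = cmp C (Ka t) (snd X)"
      and cX: "coalgebra C Ko Ka \<mu> \<nu> X" and cY: "coalgebra C Ko Ka \<mu> \<nu> Y" by (simp_all add: coalg_hom)
    from a have a1: "\<alpha> \<in> car P (fst Y)" and a2: "leq P (fst Y) \<alpha> (rdx P (snd Y) (\<kappa> (fst Y) \<alpha>))"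
      by (simp_all add: coalg_doct_simps)
    have sX: "snd X \<in> Hom C (fst X) (Ko (fst X))" using coalgebra_D[OF cX] by blast
    have sY: "snd Y \<in> Hom C (fst Y) (Ko (fst Y))" using coalgebra_D[OF cY] by blast
    have Y: "fst Y \<in> Obj C" using coalgebra_D[OF cY] by blast
    have Kt: "Ka t \<in> Hom C (Ko (fst X)) (Ko (fst Y))" using fun_hom[OF F t1] .
    have ka: "\<kappa> (fst Y) \<alpha> \<in> car P (Ko (fst Y))" using one_car[OF K Y a1] .
    have "rdx P (snd X) (\<kappa> (fst X) (rdx P t \<alpha>)) = rdx P (snd X) (rdx P (Ka t) (\<kappa> (fst Y) \<alpha>))"
      using one_nat[OF K t1 a1] by simp
    also have "\<dots> = rdx P (cmp C (Ka t) (snd X)) (\<kappa> (fst Y) \<alpha>)" using df(6)[OF sX Kt ka] by simp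
    also have "\<dots> = rdx P (cmp C (snd Y) t) (\<kappa> (fst Y) \<alpha>)" using t2 by simp
    also have "\<dots> = rdx P t (rdx P (snd Y) (\<kappa> (fst Y) \<alpha>))" using df(6)[OF t1 sY ka] .
    finally have eq: "rdx P (snd X) (\<kappa> (fst X) (rdx P t \<alpha>)) = rdx P t (rdx P (snd Y) (\<kappa> (fst Y) \<alpha>))" .
    have "leq P (fst X) (rdx P t \<alpha>) (rdx P t (rdx P (snd Y) (\<kappa> (fst Y) \<alpha>)))"
      using df(4)[OF t1 a1 df(3)[OF sY ka] a2] .
    then show "rdx (coalg_doct P \<kappa>) t \<alpha> \<in> car (coalg_doct P \<kappa>) X"
      using eq df(3)[OF t1 a1] by (simp add: coalg_doct_simps)
  next
    fix X Y t \<alpha> \<beta>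
    assume t: "t \<in> Hom (coalg_cat C Ko Ka \<mu> \<nu>) X Y" and a: "\<alpha> \<in> car (coalg_doct P \<kappa>) Y"
      and b: "\<beta> \<in> car (coalg_doct P \<kappa>) Y" and le: "leq (coalg_doct P \<kappa>) Y \<alpha> \<beta>"
    from t have t1: "t \<in> Hom C (fst X) (fst Y)" by (simp add: coalg_hom)
    show "leq (coalg_doct P \<kappa>) X (rdx (coalg_doct P \<kappa>) t \<alpha>) (rdx (coalg_doct P \<kappa>) t \<beta>)"
      using df(4)[OF t1] a b le by (simp add: coalg_doct_simps)
  next
    fix X \<alpha> assume X: "X \<in> Obj (coalg_cat C Ko Ka \<mu> \<nu>)" and a: "\<alpha> \<in> car (coalg_doct P \<kappa>) X"
    then have "coalgebra C Ko Ka \<mu> \<nu> X" by (simp add: coalg_cat_simps)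
    then have "fst X \<in> Obj C" using coalgebra_D by blast
    then show "rdx (coalg_doct P \<kappa>) (idt (coalg_cat C Ko Ka \<mu> \<nu>) X) \<alpha> = \<alpha>"
      using a df(5) by (simp add: coalg_doct_simps coalg_cat_simps)
  next
    fix X Y Z f g \<alpha>
    assume f: "f \<in> Hom (coalg_cat C Ko Ka \<mu> \<nu>) X Y" and g: "g \<in> Hom (coalg_cat C Ko Ka \<mu> \<nu>) Y Z"
      and a: "\<alpha> \<in> car (coalg_doct P \<kappa>) Z"
    have "f \<in> Hom C (fst X) (fst Y)" "g \<in> Hom C (fst Y) (fst Z)" "\<alpha> \<in> car P (fst Z)"
      using f g a by (simp_all add: coalg_hom coalg_doct_simps)
    then show "rdx (coalg_doct P \<kappa>) (cmp (coalg_cat C Ko Ka \<mu> \<nu>) g f) \<alpha> =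
       rdx (coalg_doct P \<kappa>) f (rdx (coalg_doct P \<kappa>) g \<alpha>)"
      using df(6) by (simp add: coalg_doct_simps coalg_cat_simps)
  qed
qed

lemma nat_facts:
  assumes "nat_trans C D Fo Fa Go Ga \<theta>"
  shows nat_funF: "is_functor C D Fo Fa" and nat_funG: "is_functor C D Go Ga"
    and nat_hom: "X \<in> Obj C \<Longrightarrow> \<theta> X \<in> Hom D (Fo X) (Go X)"
    and nat_nat: "f \<in> Hom C X Y \<Longrightarrow> cmp D (\<theta> Y) (Fa f) = cmp D (Ga f) (\<theta> X)"
  using assms unfolding nat_trans_def by (blast+)[4]

lemma two_facts:
  assumes "two_arrow C P D Q Fo Fa f Go Ga g \<theta>"
  shows two_oneF: "one_arrow C P D Q Fo Fa f" and two_oneG: "one_arrow C P D Q Go Ga g"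
    and two_nat: "nat_trans C D Fo Fa Go Ga \<theta>"
    and two_le: "X \<in> Obj C \<Longrightarrow> \<alpha> \<in> car P X \<Longrightarrow> leq Q (Fo X) (f X \<alpha>) (rdx Q (\<theta> X) (g X \<alpha>))"
  using assms unfolding two_arrow_def by (blast+)[4]

lemma U_functor:
  assumes F: "is_functor C C Ko Ka"
  shows "is_functor (coalg_cat C Ko Ka \<mu> \<nu>) C fst id"
  unfolding is_functor_def
proof (intro conjI allI impI ballI)
  show "category (coalg_cat C Ko Ka \<mu> \<nu>)" using coalg_cat_category[OF F] .
  show "category C" using fun_catC[OF F] .
next
  fix X assume "X \<in> Obj (coalg_cat C Ko Ka \<mu> \<nu>)"
  then have "coalgebra C Ko Ka \<mu> \<nu> X" by (simp add: coalg_cat_simps)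
  then show "fst X \<in> Obj C" using coalgebra_D by blast
next
  fix X assume "X \<in> Obj (coalg_cat C Ko Ka \<mu> \<nu>)"
  show "id (idt (coalg_cat C Ko Ka \<mu> \<nu>) X) = idt C (fst X)" by (simp add: coalg_cat_simps)
next
  fix X Y f assume "f \<in> Hom (coalg_cat C Ko Ka \<mu> \<nu>) X Y"
  then show "id f \<in> Hom C (fst X) (fst Y)" by (simp add: coalg_hom)
next
  fix X Y Z f g
  show "id (cmp (coalg_cat C Ko Ka \<mu> \<nu>) g f) = cmp C (id g) (id f)" by (simp add: coalg_cat_simps)
qed

lemma comp_functor:
  assumes F: "is_functor A B Fo Fa" and G: "is_functor B C Go Ga"
  shows "is_functor A C (Go \<circ> Fo) (Ga \<circ> Fa)"
  unfolding is_functor_def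
proof (intro conjI allI impI ballI)
  show "category A" using fun_catC[OF F] .
  show "category C" using fun_catD[OF G] .
next
  fix X assume "X \<in> Obj A" then show "(Go \<circ> Fo) X \<in> Obj C" using fun_obj[OF F] fun_obj[OF G] by simp
next
  fix X assume "X \<in> Obj A" then show "(Ga \<circ> Fa) (idt A X) = idt C ((Go \<circ> Fo) X)"
    using fun_id[OF F] fun_id[OF G] fun_obj[OF F] by simp
next
  fix X Y f assume "f \<in> Hom A X Y" then show "(Ga \<circ> Fa) f \<in> Hom C ((Go \<circ> Fo) X) ((Go \<circ> Fo) Y)"
    using fun_hom[OF F] fun_hom[OF G] by simp
next
  fix X Y Z f g assume "f \<in> Hom A X Y" "g \<in> Hom A Y Z"
  then show "(Ga \<circ> Fa) (cmp A g f) = cmp C ((Ga \<circ> Fa) g) ((Ga \<circ> Fa) f)"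
    using fun_hom[OF F] fun_cmp[OF F] fun_cmp[OF G] by (metis comp_apply)
qed

lemma part1:
  assumes comonad: "comonad_on C P Ko Ka \<kappa> \<mu> \<nu>"
  shows "em_cone (coalg_cat C Ko Ka \<mu> \<nu>) (coalg_doct P \<kappa>) C P Ko Ka \<kappa> \<mu> \<nu>
           fst id (\<lambda>A \<alpha>. \<alpha>) snd"
proof -
  have K: "one_arrow C P C P Ko Ka \<kappa>" using comonad unfolding comonad_on_def by blast
  have F: "is_functor C C Ko Ka" using one_fun[OF K] .
  have DP: "doctrine C P" using one_doctC[OF K] .
  have DK: "doctrine (coalg_cat C Ko Ka \<mu> \<nu>) (coalg_doct P \<kappa>)" using coalg_doct_doctrine[OF K] .
  have U: "is_functor (coalg_cat C Ko Ka \<mu> \<nu>) C fst id" using U_functor[OF F] .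
  have KU: "is_functor (coalg_cat C Ko Ka \<mu> \<nu>) C (Ko \<circ> fst) (Ka \<circ> id)" using comp_functor[OF U F] .
  have objc: "A \<in> Obj (coalg_cat C Ko Ka \<mu> \<nu>) \<longleftrightarrow> coalgebra C Ko Ka \<mu> \<nu> A" for A
    by (simp add: coalg_cat_simps)
  have o1: "one_arrow (coalg_cat C Ko Ka \<mu> \<nu>) (coalg_doct P \<kappa>) C P fst id (\<lambda>A \<alpha>. \<alpha>)"
    unfolding one_arrow_def using DK DP U by (auto simp: coalg_doct_simps)
  have o2: "one_arrow (coalg_cat C Ko Ka \<mu> \<nu>) (coalg_doct P \<kappa>) C P (Ko \<circ> fst) (Ka \<circ> id)
     (\<lambda>E \<beta>. \<kappa> (fst E) (id (\<lambda>A \<alpha>. \<alpha>) E \<beta>))"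
    unfolding one_arrow_def
  proof (intro conjI allI impI ballI)
    fix X \<alpha> assume X: "X \<in> Obj (coalg_cat C Ko Ka \<mu> \<nu>)" and a: "\<alpha> \<in> car (coalg_doct P \<kappa>) X"
    have X1: "fst X \<in> Obj C" using X coalgebra_D objc by blast
    have a1: "\<alpha> \<in> car P (fst X)" using a by (simp add: coalg_doct_simps)
    show "\<kappa> (fst X) (id (\<lambda>A \<alpha>. \<alpha>) X \<alpha>) \<in> car P ((Ko \<circ> fst) X)" using one_car[OF K X1 a1] by simp
    fix \<beta> assume b: "\<beta> \<in> car (coalg_doct P \<kappa>) X" and le: "leq (coalg_doct P \<kappa>) X \<alpha> \<beta>"
    have b1: "\<beta> \<in> car P (fst X)" using b by (simp add: coalg_doct_simps)
    show "leq P ((Ko \<circ> fst) X) (\<kappa> (fst X) (id (\<lambda>A \<alpha>. \<alpha>) X \<alpha>)) (\<kappa> (fst X) (id (\<lambda>A \<alpha>. \<alpha>) X \<beta>))"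
      using one_mono[OF K X1 a1 b1] le by (simp add: coalg_doct_simps)
  next
    fix X Y t \<alpha> assume t: "t \<in> Hom (coalg_cat C Ko Ka \<mu> \<nu>) X Y" and a: "\<alpha> \<in> car (coalg_doct P \<kappa>) Y"
    have t1: "t \<in> Hom C (fst X) (fst Y)" using t by (simp add: coalg_hom)
    have a1: "\<alpha> \<in> car P (fst Y)" using a by (simp add: coalg_doct_simps)
    show "\<kappa> (fst X) (id (\<lambda>A \<alpha>. \<alpha>) X (rdx (coalg_doct P \<kappa>) t \<alpha>)) =
       rdx P ((Ka \<circ> id) t) (\<kappa> (fst Y) (id (\<lambda>A \<alpha>. \<alpha>) Y \<alpha>))"
      using one_nat[OF K t1 a1] by (simp add: coalg_doct_simps)
  qed (use DK DP KU in auto)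
  have nt: "nat_trans (coalg_cat C Ko Ka \<mu> \<nu>) C fst id (Ko \<circ> fst) (Ka \<circ> id) snd"
    unfolding nat_trans_def
  proof (intro conjI allI impI ballI)
    fix X assume "X \<in> Obj (coalg_cat C Ko Ka \<mu> \<nu>)"
    then have cX: "coalgebra C Ko Ka \<mu> \<nu> X" using objc by simp
    show "snd X \<in> Hom C (fst X) ((Ko \<circ> fst) X)" using coalgebra_D[OF cX] by simp
  next
    fix X Y f assume "f \<in> Hom (coalg_cat C Ko Ka \<mu> \<nu>) X Y"
    then show "cmp C (snd Y) (id f) = cmp C ((Ka \<circ> id) f) (snd X)" by (simp add: coalg_hom)
  qed (use U KU in auto)
  have tw: "two_arrow (coalg_cat C Ko Ka \<mu> \<nu>) (coalg_doct P \<kappa>) C P fst id (\<lambda>A \<alpha>. \<alpha>)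
     (Ko \<circ> fst) (Ka \<circ> id) (\<lambda>E \<beta>. \<kappa> (fst E) (id (\<lambda>A \<alpha>. \<alpha>) E \<beta>)) snd"
    unfolding two_arrow_def using o1 o2 nt by (simp add: coalg_doct_simps)
  show ?thesis unfolding em_cone_def
    using tw by (simp add: coalg_cat_simps coalgebra_def)
qed

lemma lift_exists:
  assumes K: "one_arrow C P C P Ko Ka \<kappa>"
    and cone: "em_cone D Q C P Ko Ka \<kappa> \<mu> \<nu> Xo Xa x \<xi>"
  shows "em_lift D Q C P Ko Ka \<kappa> \<mu> \<nu> Xo Xa x \<xi> (\<lambda>E. (Xo E, \<xi> E)) Xa x"
proof -
  have F: "is_functor C C Ko Ka" using one_fun[OF K] .
  have tw: "two_arrow D Q C P Xo Xa x (Ko \<circ> Xo) (Ka \<circ> Xa) (\<lambda>E \<beta>. \<kappa> (Xo E) (x E \<beta>)) \<xi>"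
    and laws: "\<And>E. E \<in> Obj D \<Longrightarrow> cmp C (\<mu> (Xo E)) (\<xi> E) = cmp C (Ka (\<xi> E)) (\<xi> E) \<and>
        cmp C (\<nu> (Xo E)) (\<xi> E) = idt C (Xo E)"
    using cone unfolding em_cone_def by blast+
  have ox: "one_arrow D Q C P Xo Xa x" using two_oneF[OF tw] .
  have nt: "nat_trans D C Xo Xa (Ko \<circ> Xo) (Ka \<circ> Xa) \<xi>" using two_nat[OF tw] .
  have FX: "is_functor D C Xo Xa" using one_fun[OF ox] .
  have catD: "category D" using fun_catC[OF FX] .
  have DK: "doctrine (coalg_cat C Ko Ka \<mu> \<nu>) (coalg_doct P \<kappa>)" using coalg_doct_doctrine[OF K] .
  have coalg: "coalgebra C Ko Ka \<mu> \<nu> (Xo E, \<xi> E)" if E: "E \<in> Obj D" for E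
    unfolding coalgebra_def using fun_obj[OF FX E] nat_hom[OF nt E] laws[OF E] by simp
  have FL: "is_functor D (coalg_cat C Ko Ka \<mu> \<nu>) (\<lambda>E. (Xo E, \<xi> E)) Xa"
    unfolding is_functor_def
  proof (intro conjI allI impI ballI)
    show "category D" using catD .
    show "category (coalg_cat C Ko Ka \<mu> \<nu>)" using coalg_cat_category[OF F] .
  next
    fix E assume "E \<in> Obj D"
    then show "(Xo E, \<xi> E) \<in> Obj (coalg_cat C Ko Ka \<mu> \<nu>)" using coalg by (simp add: coalg_cat_simps)
  next
    fix E assume "E \<in> Obj D"
    then show "Xa (idt D E) = idt (coalg_cat C Ko Ka \<mu> \<nu>) (Xo E, \<xi> E)"
      using fun_id[OF FX] by (simp add: coalg_cat_simps)
  next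
    fix E1 E2 h assume h: "h \<in> Hom D E1 E2"
    have E: "E1 \<in> Obj D" "E2 \<in> Obj D" using cat_hom_obj[OF catD h] by blast+
    show "Xa h \<in> Hom (coalg_cat C Ko Ka \<mu> \<nu>) (Xo E1, \<xi> E1) (Xo E2, \<xi> E2)"
      unfolding coalg_hom using coalg[OF E(1)] coalg[OF E(2)] fun_hom[OF FX h] nat_nat[OF nt h]
      by simp
  next
    fix X Y Z f g assume "f \<in> Hom D X Y" "g \<in> Hom D Y Z"
    then show "Xa (cmp D g f) = cmp (coalg_cat C Ko Ka \<mu> \<nu>) (Xa g) (Xa f)"
      using fun_cmp[OF FX] by (simp add: coalg_cat_simps)
  qed
  have OL: "one_arrow D Q (coalg_cat C Ko Ka \<mu> \<nu>) (coalg_doct P \<kappa>) (\<lambda>E. (Xo E, \<xi> E)) Xa x"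
    unfolding one_arrow_def
  proof (intro conjI allI impI ballI)
    show "doctrine D Q" using one_doctC[OF ox] .
    show "doctrine (coalg_cat C Ko Ka \<mu> \<nu>) (coalg_doct P \<kappa>)" using DK .
    show "is_functor D (coalg_cat C Ko Ka \<mu> \<nu>) (\<lambda>E. (Xo E, \<xi> E)) Xa" using FL .
  next
    fix E \<beta> assume E: "E \<in> Obj D" and b: "\<beta> \<in> car Q E"
    show "x E \<beta> \<in> car (coalg_doct P \<kappa>) (Xo E, \<xi> E)"
      using one_car[OF ox E b] two_le[OF tw E b] by (simp add: coalg_doct_simps)
  next
    fix E \<alpha> \<beta> assume E: "E \<in> Obj D" and a: "\<alpha> \<in> car Q E" and b: "\<beta> \<in> car Q E" and le: "leq Q E \<alpha> \<beta>"
    show "leq (coalg_doct P \<kappa>) (Xo E, \<xi> E) (x E \<alpha>) (x E \<beta>)"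
      using one_mono[OF ox E a b le] by (simp add: coalg_doct_simps)
  next
    fix E1 E2 h \<alpha> assume h: "h \<in> Hom D E1 E2" and a: "\<alpha> \<in> car Q E2"
    show "x E1 (rdx Q h \<alpha>) = rdx (coalg_doct P \<kappa>) (Xa h) (x E2 \<alpha>)"
      using one_nat[OF ox h a] by (simp add: coalg_doct_simps)
  qed
  show ?thesis unfolding em_lift_def using OL by simp
qed

lemma lift_unique:
  assumes "em_lift D Q C P Ko Ka \<kappa> \<mu> \<nu> Xo Xa x \<xi> Xo' Xa' x'"
    and "em_lift D Q C P Ko Ka \<kappa> \<mu> \<nu> Xo Xa x \<xi> Zo Za z"
  shows "same_one_arrow D Q Xo' Xa' x' Zo Za z"
  using assms unfolding em_lift_def same_one_arrow_def by (simp add: prod_eq_iff)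

lemma part3:
  assumes X: "em_cone D Q C P Ko Ka \<kappa> \<mu> \<nu> Xo Xa x \<xi>"
    and Y: "em_cone D Q C P Ko Ka \<kappa> \<mu> \<nu> Yo Ya y \<zeta>"
    and XL: "em_lift D Q C P Ko Ka \<kappa> \<mu> \<nu> Xo Xa x \<xi> Xo' Xa' x'"
    and YL: "em_lift D Q C P Ko Ka \<kappa> \<mu> \<nu> Yo Ya y \<zeta> Yo' Ya' y'"
    and G: "two_arrow D Q C P Xo Xa x Yo Ya y \<gamma>"
    and comm: "\<forall>E\<in>Obj D. cmp C (\<zeta> E) (\<gamma> E) = cmp C (Ka (\<gamma> E)) (\<xi> E)"
  shows "two_arrow D Q (coalg_cat C Ko Ka \<mu> \<nu>) (coalg_doct P \<kappa>) Xo' Xa' x' Yo' Ya' y' \<gamma>"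
proof -
  have ox: "one_arrow D Q (coalg_cat C Ko Ka \<mu> \<nu>) (coalg_doct P \<kappa>) Xo' Xa' x'"
    and Xo': "\<forall>E\<in>Obj D. fst (Xo' E) = Xo E \<and> snd (Xo' E) = \<xi> E"
    and Xa': "\<forall>E1 E2 h. h \<in> Hom D E1 E2 \<longrightarrow> Xa' h = Xa h"
    and x': "\<forall>E\<in>Obj D. \<forall>\<beta>\<in>car Q E. x' E \<beta> = x E \<beta>"
    using XL unfolding em_lift_def by blast+
  have oy: "one_arrow D Q (coalg_cat C Ko Ka \<mu> \<nu>) (coalg_doct P \<kappa>) Yo' Ya' y'"
    and Yo': "\<forall>E\<in>Obj D. fst (Yo' E) = Yo E \<and> snd (Yo' E) = \<zeta> E"
    and Ya': "\<forall>E1 E2 h. h \<in> Hom D E1 E2 \<longrightarrow> Ya' h = Ya h"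
    and y': "\<forall>E\<in>Obj D. \<forall>\<beta>\<in>car Q E. y' E \<beta> = y E \<beta>"
    using YL unfolding em_lift_def by blast+
  have FX: "is_functor D (coalg_cat C Ko Ka \<mu> \<nu>) Xo' Xa'" using one_fun[OF ox] .
  have FY: "is_functor D (coalg_cat C Ko Ka \<mu> \<nu>) Yo' Ya'" using one_fun[OF oy] .
  have nt: "nat_trans D C Xo Xa Yo Ya \<gamma>" using two_nat[OF G] .
  have cX: "coalgebra C Ko Ka \<mu> \<nu> (Xo' E)" if "E \<in> Obj D" for E
    using fun_obj[OF FX that] by (simp add: coalg_cat_simps)
  have cY: "coalgebra C Ko Ka \<mu> \<nu> (Yo' E)" if "E \<in> Obj D" for E
    using fun_obj[OF FY that] by (simp add: coalg_cat_simps)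
  have NT: "nat_trans D (coalg_cat C Ko Ka \<mu> \<nu>) Xo' Xa' Yo' Ya' \<gamma>"
    unfolding nat_trans_def
  proof (intro conjI allI impI ballI)
    show "is_functor D (coalg_cat C Ko Ka \<mu> \<nu>) Xo' Xa'" using FX .
    show "is_functor D (coalg_cat C Ko Ka \<mu> \<nu>) Yo' Ya'" using FY .
  next
    fix E assume E: "E \<in> Obj D"
    show "\<gamma> E \<in> Hom (coalg_cat C Ko Ka \<mu> \<nu>) (Xo' E) (Yo' E)"
      unfolding coalg_hom using cX[OF E] cY[OF E] nat_hom[OF nt E] comm E Xo' Yo' by simp
  next
    fix E1 E2 h assume h: "h \<in> Hom D E1 E2"
    show "cmp (coalg_cat C Ko Ka \<mu> \<nu>) (\<gamma> E2) (Xa' h) = cmp (coalg_cat C Ko Ka \<mu> \<nu>) (Ya' h) (\<gamma> E1)"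
      using nat_nat[OF nt h] Xa' Ya' h by (simp add: coalg_cat_simps)
  qed
  show ?thesis unfolding two_arrow_def
  proof (intro conjI ballI)
    show "one_arrow D Q (coalg_cat C Ko Ka \<mu> \<nu>) (coalg_doct P \<kappa>) Xo' Xa' x'" using ox .
    show "one_arrow D Q (coalg_cat C Ko Ka \<mu> \<nu>) (coalg_doct P \<kappa>) Yo' Ya' y'" using oy .
    show "nat_trans D (coalg_cat C Ko Ka \<mu> \<nu>) Xo' Xa' Yo' Ya' \<gamma>" using NT .
  next
    fix E \<alpha> assume E: "E \<in> Obj D" and a: "\<alpha> \<in> car Q E"
    show "leq (coalg_doct P \<kappa>) (Xo' E) (x' E \<alpha>) (rdx (coalg_doct P \<kappa>) (\<gamma> E) (y' E \<alpha>))"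
      using two_le[OF G E a] E a Xo' x' y' by (simp add: coalg_doct_simps)
  qed
qed

theorem theorem6p4:
  fixes C :: "('o, 'a) cat" and P :: "('o, 'a, 'p) doct"
    and D :: "('e, 'd) cat" and Q :: "('e, 'd, 'q) doct"
  assumes comonad: "comonad_on C P Ko Ka \<kappa> \<mu> \<nu>"
  shows "em_cone (coalg_cat C Ko Ka \<mu> \<nu>) (coalg_doct P \<kappa>) C P Ko Ka \<kappa> \<mu> \<nu>
           fst id (\<lambda>A \<alpha>. \<alpha>) snd
    \<and> (\<forall>Xo Xa x \<xi>. em_cone D Q C P Ko Ka \<kappa> \<mu> \<nu> Xo Xa x \<xi> \<longrightarrow>
         (\<exists>Xo' Xa' x'. em_lift D Q C P Ko Ka \<kappa> \<mu> \<nu> Xo Xa x \<xi> Xo' Xa' x' \<and>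
           (\<forall>Zo Za z. em_lift D Q C P Ko Ka \<kappa> \<mu> \<nu> Xo Xa x \<xi> Zo Za z \<longrightarrow>
              same_one_arrow D Q Xo' Xa' x' Zo Za z)))
    \<and> (\<forall>Xo Xa x \<xi> Yo Ya y \<zeta> Xo' Xa' x' Yo' Ya' y' \<gamma>.
         em_cone D Q C P Ko Ka \<kappa> \<mu> \<nu> Xo Xa x \<xi> \<and>
         em_cone D Q C P Ko Ka \<kappa> \<mu> \<nu> Yo Ya y \<zeta> \<and>
         em_lift D Q C P Ko Ka \<kappa> \<mu> \<nu> Xo Xa x \<xi> Xo' Xa' x' \<and>
         em_lift D Q C P Ko Ka \<kappa> \<mu> \<nu> Yo Ya y \<zeta> Yo' Ya' y' \<and>
         two_arrow D Q C P Xo Xa x Yo Ya y \<gamma> \<and>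
         (\<forall>E\<in>Obj D. cmp C (\<zeta> E) (\<gamma> E) = cmp C (Ka (\<gamma> E)) (\<xi> E)) \<longrightarrow>
         (\<exists>\<gamma>'. two_arrow D Q (coalg_cat C Ko Ka \<mu> \<nu>) (coalg_doct P \<kappa>)
                  Xo' Xa' x' Yo' Ya' y' \<gamma>' \<and>
               (\<forall>E\<in>Obj D. \<gamma>' E = \<gamma> E) \<and>
               (\<forall>\<gamma>''. two_arrow D Q (coalg_cat C Ko Ka \<mu> \<nu>) (coalg_doct P \<kappa>)
                        Xo' Xa' x' Yo' Ya' y' \<gamma>'' \<and> (\<forall>E\<in>Obj D. \<gamma>'' E = \<gamma> E) \<longrightarrow>
                      (\<forall>E\<in>Obj D. \<gamma>'' E = \<gamma>' E))))"
proof (intro conjI allI impI)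
  have K: "one_arrow C P C P Ko Ka \<kappa>" using comonad unfolding comonad_on_def by blast
  show "em_cone (coalg_cat C Ko Ka \<mu> \<nu>) (coalg_doct P \<kappa>) C P Ko Ka \<kappa> \<mu> \<nu> fst id (\<lambda>A \<alpha>. \<alpha>) snd"
    using part1[OF comonad] .
  fix Xo Xa x \<xi> assume c: "em_cone D Q C P Ko Ka \<kappa> \<mu> \<nu> Xo Xa x \<xi>"
  show "\<exists>Xo' Xa' x'. em_lift D Q C P Ko Ka \<kappa> \<mu> \<nu> Xo Xa x \<xi> Xo' Xa' x' \<and>
           (\<forall>Zo Za z. em_lift D Q C P Ko Ka \<kappa> \<mu> \<nu> Xo Xa x \<xi> Zo Za z \<longrightarrow>
              same_one_arrow D Q Xo' Xa' x' Zo Za z)"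
  proof (intro exI conjI allI impI)
    show "em_lift D Q C P Ko Ka \<kappa> \<mu> \<nu> Xo Xa x \<xi> (\<lambda>E. (Xo E, \<xi> E)) Xa x"
      using lift_exists[OF K c] .
    fix Zo Za z assume "em_lift D Q C P Ko Ka \<kappa> \<mu> \<nu> Xo Xa x \<xi> Zo Za z"
    then show "same_one_arrow D Q (\<lambda>E. (Xo E, \<xi> E)) Xa x Zo Za z"
      using lift_unique[OF lift_exists[OF K c]] by blast
  qed
next
  fix Xo Xa x \<xi> Yo Ya y \<zeta> Xo' Xa' x' Yo' Ya' y' \<gamma>
  assume h: "em_cone D Q C P Ko Ka \<kappa> \<mu> \<nu> Xo Xa x \<xi> \<and>
         em_cone D Q C P Ko Ka \<kappa> \<mu> \<nu> Yo Ya y \<zeta> \<and>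
         em_lift D Q C P Ko Ka \<kappa> \<mu> \<nu> Xo Xa x \<xi> Xo' Xa' x' \<and>
         em_lift D Q C P Ko Ka \<kappa> \<mu> \<nu> Yo Ya y \<zeta> Yo' Ya' y' \<and>
         two_arrow D Q C P Xo Xa x Yo Ya y \<gamma> \<and>
         (\<forall>E\<in>Obj D. cmp C (\<zeta> E) (\<gamma> E) = cmp C (Ka (\<gamma> E)) (\<xi> E))"
  then have "two_arrow D Q (coalg_cat C Ko Ka \<mu> \<nu>) (coalg_doct P \<kappa>) Xo' Xa' x' Yo' Ya' y' \<gamma>"
    using h by (elim conjE) (rule part3)
  then show "\<exists>\<gamma>'. two_arrow D Q (coalg_cat C Ko Ka \<mu> \<nu>) (coalg_doct P \<kappa>)
                  Xo' Xa' x' Yo' Ya' y' \<gamma>' \<and>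
               (\<forall>E\<in>Obj D. \<gamma>' E = \<gamma> E) \<and>
               (\<forall>\<gamma>''. two_arrow D Q (coalg_cat C Ko Ka \<mu> \<nu>) (coalg_doct P \<kappa>)
                        Xo' Xa' x' Yo' Ya' y' \<gamma>'' \<and> (\<forall>E\<in>Obj D. \<gamma>'' E = \<gamma> E) \<longrightarrow>
                      (\<forall>E\<in>Obj D. \<gamma>'' E = \<gamma>' E))"
    by blast
qed

end
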